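(* Let $\varphi\in\Phi$ be arbitrary. Then there exist uncountably many entire transcendental functions $f(z)=c_0+c_1z+c_2z^2+\cdots$ with all $c_j\in\mathbb{Q}\setminus\{0\}$ such that for every $s\in\{0,1,2,\ldots\}$: (i) $f^{(s)}(0)\in\mathbb{Q}$; (ii) $f^{(s)}(\mathbb{Q}\setminus\{0\})\subseteq\mathscr{L}$; (iii) $f^{(s)}(\mathscr{L}_{\varphi}^{\ast})\subseteq\mathscr{L}$.
   Context: An entire transcendental function is an entire function that is not a polynomial. $\mathscr{L}$ is the set of Liouville numbers (real irrational $\zeta$ such that for every $\eta>0$ there are infinitely many rationals $y/x$, $x\geq1$, with $|\zeta-y/x|\leq x^{-\eta}$). $\Vert\alpha\Vert$ is the distance from $\alpha$ to the nearest integer. $\Phi$ is the set of non-decreasing $\varphi:\mathbb{R}_{\geq 2}\to\mathbb{R}_{\geq 2}$ with $\lim_{x\to\infty}\varphi(x)=\infty$. For $\varphi\in\Phi$, $\mathscr{L}_{\varphi}^{\ast}$ is the set of $\zeta\in\mathscr{L}$ for which there is $N_0(\zeta)$ such that for every integer $N\geq N_0(\zeta)$ there is an integer $q$ with $2\leq q\leq\varphi(N)$ and $\Vert q\zeta\Vert\leq q^{-N}$. $f^{(s)}$ is the $s$-th derivative, $f^{(0)}=f$. *)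

theory Defs
  imports "HOL-Analysis.Analysis"
begin

definition Liouville_set :: "real set" where
  "Liouville_set = {\<zeta>. \<zeta> \<notin> \<rat> \<and>
     (\<forall>\<eta>>0. infinite {r :: real. \<exists>y x :: int. x \<ge> 1 \<and> r = of_int y / of_int x \<and>
        \<bar>\<zeta> - of_int y / of_int x\<bar> \<le> (of_int x) powr (- \<eta>)})}"

definition dist_int :: "real \<Rightarrow> real" where
  "dist_int \<alpha> = (INF k\<in>(\<int>::real set). \<bar>\<alpha> - k\<bar>)"

definition Phi_class :: "(real \<Rightarrow> real) set" where
  "Phi_class = {\<phi>. mono_on {2..} \<phi> \<and> (\<forall>x\<ge>2. \<phi> x \<ge> 2) \<and> filterlim \<phi> at_top at_top}"

definition Liouville_phi_star :: "(real \<Rightarrow> real) \<Rightarrow> real set" where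
  "Liouville_phi_star \<phi> = {\<zeta> \<in> Liouville_set. \<exists>N0::nat. \<forall>N::nat\<ge>N0.
      \<exists>q::int. 2 \<le> q \<and> real_of_int q \<le> \<phi> (real N) \<and>
        dist_int (of_int q * \<zeta>) \<le> (of_int q) powr (- real N)}"

definition entire_transcendental :: "(complex \<Rightarrow> complex) \<Rightarrow> bool" where
  "entire_transcendental f \<longleftrightarrow> f holomorphic_on UNIV \<and>
     \<not> (\<exists>p :: complex poly. \<forall>z. f z = poly p z)"

end

theory Submission
  imports Defs
begin

definition Nf :: "nat \<Rightarrow> nat \<Rightarrow> nat" where "Nf j d = j*j + j*d + j"
definition Phif :: "(real \<Rightarrow> real) \<Rightarrow> nat \<Rightarrow> nat \<Rightarrow> nat" where
  "Phif \<phi> j d = max 2 (nat \<lceil>\<phi> (real (Nf j d))\<rceil>)"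
definition Pf :: "(real \<Rightarrow> real) \<Rightarrow> nat \<Rightarrow> nat \<Rightarrow> nat" where
  "Pf \<phi> j d = 2 * (Phif \<phi> j d ^ j * d) ^ j"

fun Dseq :: "(real \<Rightarrow> real) \<Rightarrow> nat \<Rightarrow> nat" where
  "Dseq \<phi> 0 = 1"
| "Dseq \<phi> (Suc i) = Dseq \<phi> i * (Suc i)^(2*Suc i) * 2^(Suc i) * Pf \<phi> i (Dseq \<phi> i)"

lemma Phif_ge: "Phif \<phi> j d \<ge> 2" by (simp add: Phif_def)

lemma ge1_mult: "(a::nat) \<ge> 1 \<Longrightarrow> b \<ge> 1 \<Longrightarrow> a * b \<ge> 1"
  by (simp add: one_le_mult_iff)

lemma Pf_pos: "d \<ge> 1 \<Longrightarrow> Pf \<phi> j d \<ge> 1"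
proof -
  assume "d \<ge> 1"
  have "Phif \<phi> j d ^ j \<ge> 1" using Phif_ge[of \<phi> j d] by (simp add: one_le_power)
  hence "Phif \<phi> j d ^ j * d \<ge> 1" using \<open>d \<ge> 1\<close> by (rule ge1_mult)
  hence "(Phif \<phi> j d ^ j * d) ^ j \<ge> 1" by (simp add: one_le_power)
  thus ?thesis by (simp add: Pf_def)
qed


lemma Dseq_pos: "Dseq \<phi> i \<ge> 1"
proof (induction i)
  case 0 then show ?case by simp
next
  case (Suc i)
  have "Pf \<phi> i (Dseq \<phi> i) \<ge> 1" using Pf_pos Suc by blast
  moreover have "(Suc i)^(2*Suc i) \<ge> (1::nat)" by (rule one_le_power) simp
  moreover have "(2::nat)^(Suc i) \<ge> 1" by (rule one_le_power) simp
  ultimately show ?case using Suc by (simp only: Dseq.simps ge1_mult)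
qed

lemma Dseq_step_ge: "Dseq \<phi> (Suc i) \<ge> Dseq \<phi> i * Suc i"
proof -
  have a: "(Suc i)^(2*Suc i) \<ge> Suc i"
  proof -
    have "Suc i = (Suc i)^1" by simp
    also have "\<dots> \<le> (Suc i)^(2*Suc i)" by (rule power_increasing) auto
    finally show ?thesis .
  qed
  have b: "2^(Suc i) * Pf \<phi> i (Dseq \<phi> i) \<ge> 1"
    using Pf_pos[OF Dseq_pos, of \<phi> i] by (intro ge1_mult) (auto intro: one_le_power)
  have "Dseq \<phi> i * Suc i \<le> Dseq \<phi> i * (Suc i)^(2*Suc i)" using a by (rule mult_le_mono2)
  also have "\<dots> \<le> Dseq \<phi> i * (Suc i)^(2*Suc i) * (2^(Suc i) * Pf \<phi> i (Dseq \<phi> i))"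
    using b by (metis mult.right_neutral mult_le_mono2)
  finally show ?thesis by (simp only: Dseq.simps mult.assoc)
qed

lemma Dseq_mono_step: "Dseq \<phi> i \<le> Dseq \<phi> (Suc i)"
  using Dseq_step_ge[of \<phi> i] by (metis mult.right_neutral mult_le_mono2 order_trans Suc_le_mono zero_le le_add1 mult_Suc_right)

lemma Dseq_mono: "i \<le> k \<Longrightarrow> Dseq \<phi> i \<le> Dseq \<phi> k"
proof (induction k rule: dec_induct)
  case base then show ?case by simp
next
  case (step k)
  then show ?case using Dseq_mono_step[of \<phi> k] by linarith
qed

lemma Dseq_dvd: "i \<le> k \<Longrightarrow> Dseq \<phi> i dvd Dseq \<phi> k"
proof (induction k rule: dec_induct)
  case base then show ?case by simp
next
  case (step k)
  have "Dseq \<phi> k dvd Dseq \<phi> (Suc k)" by (simp add: mult.assoc)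
  then show ?case using step.IH dvd_trans by blast
qed

lemma Dseq_fact: "fact k \<le> Dseq \<phi> k"
proof (induction k)
  case 0 then show ?case by simp
next
  case (Suc k)
  have "fact (Suc k) = Suc k * fact k" by simp
  also have "\<dots> \<le> Suc k * Dseq \<phi> k" using Suc by (rule mult_le_mono2)
  also have "\<dots> \<le> Dseq \<phi> (Suc k)" using Dseq_step_ge[of \<phi> k] by (simp add: mult.commute)
  finally show ?case .
qed

lemma Dseq_ge_self: "k \<le> Dseq \<phi> k"
  using Dseq_fact[of k \<phi>] fact_ge_self[of k] by linarith

lemma Nf_mono: "j \<le> j' \<Longrightarrow> d \<le> d' \<Longrightarrow> Nf j d \<le> Nf j' d'"
  unfolding Nf_def by (intro add_mono mult_mono) auto

lemma Phif_mono:
  assumes "mono_on {2..} \<phi>" "1 \<le> j" "j \<le> j'" "1 \<le> d" "d \<le> d'"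
  shows "Phif \<phi> j d \<le> Phif \<phi> j' d'"
proof -
  have "j*d \<ge> 1" using assms(2,4) by (rule ge1_mult)
  hence "Nf j d \<ge> 2" using assms(2) unfolding Nf_def by linarith
  hence "real (Nf j d) \<in> {2..}" by simp
  moreover have "real (Nf j d) \<le> real (Nf j' d')" using Nf_mono assms by simp
  moreover from calculation have "real (Nf j' d') \<in> {2..}" by simp
  ultimately have "\<phi> (real (Nf j d)) \<le> \<phi> (real (Nf j' d'))"
    using assms(1) by (simp add: mono_on_def)
  hence "\<lceil>\<phi> (real (Nf j d))\<rceil> \<le> \<lceil>\<phi> (real (Nf j' d'))\<rceil>" by (rule ceiling_mono)
  hence "nat \<lceil>\<phi> (real (Nf j d))\<rceil> \<le> nat \<lceil>\<phi> (real (Nf j' d'))\<rceil>" by (rule nat_mono)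
  thus ?thesis unfolding Phif_def by (rule max.mono[OF order_refl])
qed

lemma Pf_mono:
  assumes "mono_on {2..} \<phi>" "1 \<le> j" "j \<le> j'" "1 \<le> d" "d \<le> d'"
  shows "Pf \<phi> j d \<le> Pf \<phi> j' d'"
proof -
  let ?a = "Phif \<phi> j d" and ?b = "Phif \<phi> j' d'"
  have ab: "?a \<le> ?b" by (rule Phif_mono[OF assms])
  have b1: "?b \<ge> 1" using Phif_ge[of \<phi> j' d'] by simp
  have "?a ^ j \<le> ?b ^ j" using ab by (rule power_mono) simp
  also have "\<dots> \<le> ?b ^ j'" using assms(3) b1 by (rule power_increasing)
  finally have "?a ^ j * d \<le> ?b ^ j' * d'" using assms(5) by (rule mult_le_mono)
  moreover have "?b ^ j' * d' \<ge> 1" using b1 assms(4,5) by (intro ge1_mult one_le_power) auto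
  ultimately have "(?a ^ j * d) ^ j \<le> (?b ^ j' * d') ^ j'"
  proof -
    assume h1: "?a ^ j * d \<le> ?b ^ j' * d'" and h2: "?b ^ j' * d' \<ge> 1"
    have "(?a ^ j * d) ^ j \<le> (?b ^ j' * d') ^ j" using h1 by (rule power_mono) simp
    also have "\<dots> \<le> (?b ^ j' * d') ^ j'" using assms(3) h2 by (rule power_increasing)
    finally show ?thesis .
  qed
  thus ?thesis unfolding Pf_def by simp
qed

lemma Dseq_big:
  assumes "mono_on {2..} \<phi>" "1 \<le> j" "j < i"
  shows "real (Dseq \<phi> i) \<ge> real i ^ (2*i) * 2^i * real (Pf \<phi> j (Dseq \<phi> j))"
proof -
  obtain m where m: "i = Suc m" "j \<le> m" using assms(3) by (cases i) auto
  have "Pf \<phi> j (Dseq \<phi> j) \<le> Pf \<phi> m (Dseq \<phi> m)"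
    using assms(1,2) m(2) Dseq_pos Dseq_mono by (intro Pf_mono) auto
  hence "i ^ (2*i) * 2^i * Pf \<phi> j (Dseq \<phi> j) \<le> 1 * (i ^ (2*i) * 2^i * Pf \<phi> m (Dseq \<phi> m))"
    by simp
  also have "\<dots> \<le> Dseq \<phi> m * (i ^ (2*i) * 2^i * Pf \<phi> m (Dseq \<phi> m))"
    using Dseq_pos by (intro mult_le_mono1) auto
  also have "\<dots> = Dseq \<phi> i" using m by (simp add: mult.assoc)
  finally have "i ^ (2*i) * 2^i * Pf \<phi> j (Dseq \<phi> j) \<le> Dseq \<phi> i" .
  hence "real (i ^ (2*i) * 2^i * Pf \<phi> j (Dseq \<phi> j)) \<le> real (Dseq \<phi> i)" by (simp only: of_nat_le_iff)
  thus ?thesis by simp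
qed


fun Mf :: "nat \<Rightarrow> nat \<Rightarrow> nat" where
  "Mf 0 k = 1"
| "Mf (Suc s) k = Suc k * Mf s (Suc k)"

lemma diffs_iter: "(diffs ^^ s) c k = of_nat (Mf s k) * c (k + s)"
proof (induction s arbitrary: k)
  case 0 then show ?case by simp
next
  case (Suc s)
  have "(diffs ^^ Suc s) c k = of_nat (Suc k) * (diffs ^^ s) c (Suc k)"
    by (simp add: diffs_def)
  also have "\<dots> = of_nat (Suc k) * (of_nat (Mf s (Suc k)) * c (Suc k + s))" by (simp only: Suc)
  also have "\<dots> = of_nat (Mf (Suc s) k) * c (k + Suc s)" by (simp add: algebra_simps)
  finally show ?case .
qed

lemma Mf_pos: "Mf s k \<ge> 1"
proof (induction s arbitrary: k)
  case 0 then show ?case by simp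
next
  case (Suc s)
  have "Suc k * Mf s (Suc k) \<ge> 1" using Suc[of "Suc k"] by (intro ge1_mult) auto
  thus ?case by (simp only: Mf.simps)
qed

lemma Mf_le: "Mf s k \<le> (k + s) ^ s"
proof (induction s arbitrary: k)
  case 0 then show ?case by simp
next
  case (Suc s)
  have "Mf (Suc s) k = Suc k * Mf s (Suc k)" by simp
  also have "\<dots> \<le> Suc k * (Suc k + s) ^ s" using Suc by (rule mult_le_mono2)
  also have "\<dots> \<le> (k + Suc s) * (k + Suc s) ^ s" by (intro mult_le_mono) auto
  finally show ?case by simp
qed

lemma summable_diffs_iter:
  fixes c :: "nat \<Rightarrow> 'a::{real_normed_field,banach}"
  assumes "\<And>z. summable (\<lambda>n. c n * z^n)"
  shows "summable (\<lambda>n. (diffs ^^ s) c n * z^n)"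
proof (induction s arbitrary: z)
  case 0 then show ?case using assms by simp
next
  case (Suc s)
  have "summable (\<lambda>n. diffs ((diffs ^^ s) c) n * z^n)"
    by (rule termdiff_converges_all) (rule Suc)
  thus ?case by simp
qed

lemma deriv_iter:
  fixes c :: "nat \<Rightarrow> 'a::{real_normed_field,banach}"
  assumes "\<And>z. summable (\<lambda>n. c n * z^n)"
  shows "(deriv ^^ s) (\<lambda>z. \<Sum>n. c n * z^n) = (\<lambda>z. \<Sum>n. (diffs ^^ s) c n * z^n)"
proof (induction s)
  case 0 then show ?case by simp
next
  case (Suc s)
  have "(deriv ^^ Suc s) (\<lambda>z. \<Sum>n. c n * z^n) = deriv (\<lambda>z. \<Sum>n. (diffs ^^ s) c n * z^n)"
    using Suc by simp
  also have "\<dots> = (\<lambda>z. \<Sum>n. diffs ((diffs ^^ s) c) n * z^n)"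
  proof
    fix z
    show "deriv (\<lambda>z. \<Sum>n. (diffs ^^ s) c n * z^n) z = (\<Sum>n. diffs ((diffs ^^ s) c) n * z^n)"
      by (rule DERIV_imp_deriv, rule termdiffs_strong_converges_everywhere)
         (rule summable_diffs_iter[OF assms])
  qed
  finally show ?case by simp
qed

lemma has_deriv_iter:
  fixes c :: "nat \<Rightarrow> 'a::{real_normed_field,banach}"
  assumes "\<And>z. summable (\<lambda>n. c n * z^n)"
  shows "((\<lambda>z. \<Sum>n. (diffs ^^ s) c n * z^n) has_field_derivative
          (\<Sum>n. (diffs ^^ Suc s) c n * z^n)) (at z)"
  using termdiffs_strong_converges_everywhere[OF summable_diffs_iter[OF assms]] by simp


lemma liou_crit:
  fixes \<zeta> :: real
  assumes irr: "\<zeta> \<notin> \<rat>"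
    and app: "\<And>k::nat. \<exists>x y::int. 1 \<le> x \<and> int k \<le> x \<and> \<bar>\<zeta> - y/x\<bar> \<le> 1 / real_of_int x ^ k"
  shows "\<zeta> \<in> Liouville_set"
  unfolding Liouville_set_def
proof (intro CollectI conjI allI impI irr)
  fix \<eta> :: real assume "\<eta> > 0"
  define S where "S = {r :: real. \<exists>y x :: int. x \<ge> 1 \<and> r = of_int y / of_int x \<and>
        \<bar>\<zeta> - of_int y / of_int x\<bar> \<le> (of_int x) powr (- \<eta>)}"
  have key: "\<exists>r\<in>S. \<bar>\<zeta> - r\<bar> \<le> 1 / real k" if k: "real k \<ge> \<eta>" "k \<ge> 1" for k :: nat
  proof -
    obtain x y :: int where xy: "1 \<le> x" "int k \<le> x" "\<bar>\<zeta> - y/x\<bar> \<le> 1 / real_of_int x ^ k"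
      using app[of k] by blast
    have x1: "real_of_int x \<ge> 1" using xy by simp
    have "real_of_int x powr \<eta> \<le> real_of_int x powr real k" using k(1) x1 by (rule powr_mono)
    also have "\<dots> = real_of_int x ^ k" using x1 by (simp add: powr_realpow)
    finally have "1 / real_of_int x ^ k \<le> 1 / real_of_int x powr \<eta>"
      using x1 by (intro divide_left_mono) auto
    also have "\<dots> = real_of_int x powr (-\<eta>)" by (simp add: powr_minus divide_inverse)
    finally have c1: "1 / real_of_int x ^ k \<le> real_of_int x powr (-\<eta>)" .
    have inS: "y/x \<in> S" unfolding S_def
      by (intro CollectI exI[of _ y] exI[of _ x] conjI xy(1) refl order_trans[OF xy(3) c1])
    have "1 / real_of_int x ^ k \<le> 1 / real k"
    proof -
      have "real k \<le> real_of_int x" using xy by simp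
      also have "real_of_int x = real_of_int x ^ 1" by simp
      also have "\<dots> \<le> real_of_int x ^ k" using x1 k(2) by (intro power_increasing) auto
      finally show ?thesis using k(2) by (intro divide_left_mono) auto
    qed
    then have c2: "1 / real_of_int x ^ k \<le> 1 / real k" .
    show ?thesis using order_trans[OF xy(3) c2] inS by blast
  qed
  show "infinite S"
  proof
    assume fin: "finite S"
    have "real (nat \<lceil>\<eta>\<rceil> + 1) \<ge> \<eta>" by linarith
    hence "S \<noteq> {}" using key[of "nat \<lceil>\<eta>\<rceil> + 1"] by auto
    have pos: "\<bar>\<zeta> - r\<bar> > 0" if "r \<in> S" for r
    proof -
      from that obtain y x :: int where "r = of_int y / of_int x" unfolding S_def by blast
      hence "r \<in> \<rat>" by simp
      hence "r \<noteq> \<zeta>" using irr by auto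
      thus ?thesis by simp
    qed
    define \<delta> where "\<delta> = Min ((\<lambda>r. \<bar>\<zeta> - r\<bar>) ` S)"
    have "\<delta> \<in> (\<lambda>r. \<bar>\<zeta> - r\<bar>) ` S" unfolding \<delta>_def using fin \<open>S \<noteq> {}\<close> by (intro Min_in) auto
    hence dpos: "\<delta> > 0" using pos by auto
    have dle: "\<delta> \<le> \<bar>\<zeta> - r\<bar>" if "r \<in> S" for r unfolding \<delta>_def using fin that by (intro Min_le) auto
    define k where "k = nat \<lceil>\<eta>\<rceil> + nat \<lceil>1/\<delta>\<rceil> + 1"
    have "real k \<ge> \<eta>" unfolding k_def by linarith
    moreover have "k \<ge> 1" unfolding k_def by simp
    ultimately obtain r where r: "r \<in> S" "\<bar>\<zeta> - r\<bar> \<le> 1 / real k" using key by blast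
    have "real k > 1/\<delta>" unfolding k_def by linarith
    hence "1 / real k < \<delta>" using dpos by (simp add: divide_less_eq mult.commute)
    moreover have "\<delta> \<le> \<bar>\<zeta> - r\<bar>" using r(1) by (rule dle)
    ultimately show False using r(2) by linarith
  qed
qed

definition Good :: "(real \<Rightarrow> real) \<Rightarrow> real \<Rightarrow> bool" where
  "Good \<phi> \<zeta> \<longleftrightarrow> \<zeta> \<noteq> 0 \<and> (\<exists>N0. \<forall>N\<ge>N0. \<exists>q p::int. 2 \<le> q \<and> real_of_int q \<le> \<phi> (real N) \<and>
      \<bar>\<zeta> - p/q\<bar> \<le> 1 / real_of_int q ^ Suc N)"

lemma dist_int_eq: "dist_int \<alpha> = \<bar>\<alpha> - of_int (round \<alpha>)\<bar>"
  unfolding dist_int_def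
proof (rule cInf_eq_minimum)
  show "\<bar>\<alpha> - of_int (round \<alpha>)\<bar> \<in> (\<lambda>k. \<bar>\<alpha> - k\<bar>) ` \<int>" by (auto simp: Ints_def)
  fix z assume "z \<in> (\<lambda>k. \<bar>\<alpha> - k\<bar>) ` \<int>"
  then obtain m :: int where z: "z = \<bar>\<alpha> - of_int m\<bar>" by (auto simp: Ints_def)
  have h: "\<bar>of_int (round \<alpha>) - \<alpha>\<bar> \<le> 1/2" by (rule of_int_round_abs_le)
  show "\<bar>\<alpha> - of_int (round \<alpha>)\<bar> \<le> z"
  proof (cases "m = round \<alpha>")
    case True then show ?thesis using z by simp
  next
    case False
    hence "\<bar>m - round \<alpha>\<bar> \<ge> 1" by linarith
    hence "\<bar>real_of_int m - of_int (round \<alpha>)\<bar> \<ge> 1"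
      by (metis of_int_1_le_iff of_int_abs of_int_diff)
    thus ?thesis using z h by linarith
  qed
qed

lemma rat_Good:
  assumes "\<phi> \<in> Phi_class" "r \<in> \<rat>" "r \<noteq> 0"
  shows "Good \<phi> r"
proof -
  obtain a b :: int where ab: "b > 0" "r = of_int a / of_int b" using Rats_cases'[OF assms(2)] by metis
  have "filterlim \<phi> at_top at_top" using assms(1) by (simp add: Phi_class_def)
  hence "eventually (\<lambda>x. \<phi> x \<ge> real_of_int (2*b)) at_top" by (simp add: filterlim_at_top)
  then obtain X where X: "\<And>x. x \<ge> X \<Longrightarrow> \<phi> x \<ge> real_of_int (2*b)" by (auto simp: eventually_at_top_linorder)
  have "\<forall>N\<ge>nat \<lceil>X\<rceil>. \<exists>q p::int. 2 \<le> q \<and> real_of_int q \<le> \<phi> (real N) \<and> \<bar>r - p/q\<bar> \<le> 1 / real_of_int q ^ Suc N"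
  proof (intro allI impI)
    fix N assume "N \<ge> nat \<lceil>X\<rceil>"
    hence "real N \<ge> X" by linarith
    hence "\<phi> (real N) \<ge> real_of_int (2*b)" by (rule X)
    moreover have "r - of_int (2*a) / of_int (2*b) = 0" using ab by simp
    ultimately show "\<exists>q p::int. 2 \<le> q \<and> real_of_int q \<le> \<phi> (real N) \<and> \<bar>r - p/q\<bar> \<le> 1 / real_of_int q ^ Suc N"
      using ab by (intro exI[of _ "2*b"] exI[of _ "2*a"]) auto
  qed
  thus ?thesis using assms(3) unfolding Good_def by blast
qed

lemma Lstar_Good:
  assumes "\<zeta> \<in> Liouville_phi_star \<phi>"
  shows "Good \<phi> \<zeta>"
proof -
  from assms have L: "\<zeta> \<in> Liouville_set" and
    "\<exists>N0::nat. \<forall>N::nat\<ge>N0. \<exists>q::int. 2 \<le> q \<and> real_of_int q \<le> \<phi> (real N) \<and>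
        dist_int (of_int q * \<zeta>) \<le> (of_int q) powr (- real N)"
    unfolding Liouville_phi_star_def by auto
  then obtain N0 :: nat where hN0: "\<And>N. N \<ge> N0 \<Longrightarrow> \<exists>q::int. 2 \<le> q \<and> real_of_int q \<le> \<phi> (real N) \<and>
        dist_int (of_int q * \<zeta>) \<le> (of_int q) powr (- real N)" by blast
  have nz: "\<zeta> \<noteq> 0" using L unfolding Liouville_set_def by auto
  have "\<forall>N\<ge>N0. \<exists>q p::int. 2 \<le> q \<and> real_of_int q \<le> \<phi> (real N) \<and> \<bar>\<zeta> - p/q\<bar> \<le> 1 / real_of_int q ^ Suc N"
  proof (intro allI impI)
    fix N assume "N \<ge> N0"
    then obtain q :: int where q: "2 \<le> q" "real_of_int q \<le> \<phi> (real N)"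
      "dist_int (of_int q * \<zeta>) \<le> (of_int q) powr (- real N)" using hN0 by blast
    define p where "p = round (of_int q * \<zeta>)"
    have qpos: "real_of_int q > 0" using q by simp
    have "\<bar>of_int q * \<zeta> - of_int p\<bar> = dist_int (of_int q * \<zeta>)" unfolding dist_int_eq p_def ..
    also have "\<dots> \<le> (of_int q) powr (- real N)" by (rule q(3))
    also have "\<dots> = 1 / real_of_int q ^ N" using qpos by (simp add: powr_minus powr_realpow divide_inverse)
    finally have h: "\<bar>of_int q * \<zeta> - of_int p\<bar> \<le> 1 / real_of_int q ^ N" .
    have e: "\<zeta> - p/q = (of_int q * \<zeta> - of_int p) / real_of_int q"
      using qpos by (simp add: diff_divide_distrib)
    have "\<bar>\<zeta> - p/q\<bar> = \<bar>of_int q * \<zeta> - of_int p\<bar> / real_of_int q"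
      unfolding e using qpos by simp
    also have "\<dots> \<le> (1 / real_of_int q ^ N) / real_of_int q" using h qpos by (intro divide_right_mono) auto
    also have "\<dots> = 1 / real_of_int q ^ Suc N" by simp
    finally have "\<bar>\<zeta> - p/q\<bar> \<le> 1 / real_of_int q ^ Suc N" .
    thus "\<exists>q p::int. 2 \<le> q \<and> real_of_int q \<le> \<phi> (real N) \<and> \<bar>\<zeta> - p/q\<bar> \<le> 1 / real_of_int q ^ Suc N"
      using q(1,2) by blast
  qed
  thus ?thesis using nz unfolding Good_def by blast
qed


definition Af :: "(nat \<Rightarrow> bool) \<Rightarrow> nat \<Rightarrow> nat" where "Af b k = (if b k then 2 else 1)"
definition cr :: "(real \<Rightarrow> real) \<Rightarrow> (nat \<Rightarrow> bool) \<Rightarrow> nat \<Rightarrow> real" where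
  "cr \<phi> b k = real (Af b k) / real (Dseq \<phi> k)"
definition hd :: "(real \<Rightarrow> real) \<Rightarrow> (nat \<Rightarrow> bool) \<Rightarrow> nat \<Rightarrow> nat \<Rightarrow> real" where
  "hd \<phi> b s = (diffs ^^ s) (cr \<phi> b)"
definition Hf :: "(real \<Rightarrow> real) \<Rightarrow> (nat \<Rightarrow> bool) \<Rightarrow> nat \<Rightarrow> real \<Rightarrow> real" where
  "Hf \<phi> b s t = (\<Sum>k. hd \<phi> b s k * t^k)"
definition Tf :: "(real \<Rightarrow> real) \<Rightarrow> (nat \<Rightarrow> bool) \<Rightarrow> nat \<Rightarrow> nat \<Rightarrow> real \<Rightarrow> real" where
  "Tf \<phi> b s n t = (\<Sum>k<Suc n. hd \<phi> b s k * t^k)"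

lemma Af_bounds: "1 \<le> Af b k" "Af b k \<le> 2" by (auto simp: Af_def)

lemma cr_pos: "cr \<phi> b k > 0"
  using Af_bounds[of b k] Dseq_pos[of \<phi> k] by (simp add: cr_def)

lemma cr_le: "cr \<phi> b k \<le> 2 / fact k"
proof -
  have "real (fact k) \<le> real (Dseq \<phi> k)" using Dseq_fact[of k \<phi>] by (simp only: of_nat_le_iff)
  hence f: "fact k \<le> real (Dseq \<phi> k)" by simp
  have "cr \<phi> b k \<le> 2 / real (Dseq \<phi> k)" unfolding cr_def using Af_bounds[of b k] Dseq_pos[of \<phi> k]
    by (intro divide_right_mono) auto
  also have "\<dots> \<le> 2 / fact k"
  proof (rule divide_left_mono)
    show "(fact k :: real) \<le> real (Dseq \<phi> k)" by (rule f)
    have "(0::real) < fact k" by simp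
    moreover have "(0::real) < real (Dseq \<phi> k)" using Dseq_pos[of \<phi> k] by simp
    ultimately show "0 < real (Dseq \<phi> k) * fact k" by simp
  qed simp
  finally show ?thesis .
qed

lemma summable_cr:
  fixes z :: "'a::{real_normed_field,banach}"
  shows "summable (\<lambda>k. of_real (cr \<phi> b k) * z^k)"
proof (rule summable_comparison_test)
  show "summable (\<lambda>k. 2 * (inverse (fact k) * norm z ^ k))"
    by (intro summable_mult summable_exp)
  show "\<exists>N. \<forall>n\<ge>N. norm (of_real (cr \<phi> b n) * z ^ n) \<le> 2 * (inverse (fact n) * norm z ^ n)"
  proof (intro exI allI impI)
    fix n :: nat
    have "norm (of_real (cr \<phi> b n) * z ^ n) = cr \<phi> b n * norm z ^ n"
      using cr_pos[of \<phi> b n] by (simp add: norm_mult norm_power)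
    also have "\<dots> \<le> (2 / fact n) * norm z ^ n" using cr_le by (intro mult_right_mono) auto
    finally show "norm (of_real (cr \<phi> b n) * z ^ n) \<le> 2 * (inverse (fact n) * norm z ^ n)"
      by (simp add: divide_inverse)
  qed
qed

lemma summable_cr_real: "summable (\<lambda>k. cr \<phi> b k * t^k)"
  using summable_cr[of \<phi> b t] by simp

lemma hd_eq: "hd \<phi> b s k = real (Mf s k) * cr \<phi> b (k + s)"
  unfolding hd_def by (rule diffs_iter)

lemma hd_pos: "hd \<phi> b s k > 0"
  using Mf_pos[of s k] cr_pos[of \<phi> b "k+s"] by (simp add: hd_eq)

lemma summable_hd: "summable (\<lambda>k. hd \<phi> b s k * t^k)"
  unfolding hd_def by (rule summable_diffs_iter) (rule summable_cr_real)

lemma Hf_deriv: "(Hf \<phi> b s has_field_derivative Hf \<phi> b (Suc s) t) (at t)"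
  unfolding Hf_def hd_def by (rule has_deriv_iter) (rule summable_cr_real)

lemma suminf_abs_bound:
  fixes f g :: "nat \<Rightarrow> real"
  assumes "summable g" "\<And>k. \<bar>f k\<bar> \<le> g k"
  shows "\<bar>suminf f\<bar> \<le> suminf g"
proof -
  have s: "summable (\<lambda>k. norm (f k))"
    by (rule summable_comparison_test[OF _ assms(1)]) (use assms(2) in auto)
  have "\<bar>suminf f\<bar> \<le> (\<Sum>k. norm (f k))" using summable_norm[OF s] by simp
  also have "\<dots> \<le> suminf g" using s assms by (intro suminf_le) auto
  finally show ?thesis .
qed

lemma Hf_abs_le:
  assumes "\<bar>t\<bar> \<le> R"
  shows "\<bar>Hf \<phi> b s t\<bar> \<le> Hf \<phi> b s R"
  unfolding Hf_def
proof (rule suminf_abs_bound[OF summable_hd])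
  fix k
  have "\<bar>hd \<phi> b s k * t ^ k\<bar> = hd \<phi> b s k * \<bar>t\<bar> ^ k" using hd_pos[of \<phi> b s k] by (simp add: abs_mult power_abs)
  also have "\<dots> \<le> hd \<phi> b s k * R ^ k" using assms hd_pos[of \<phi> b s k]
    by (intro mult_left_mono power_mono) auto
  finally show "\<bar>hd \<phi> b s k * t ^ k\<bar> \<le> hd \<phi> b s k * R ^ k" .
qed

lemma Hf_lipschitz:
  assumes "\<bar>t\<bar> \<le> R" "\<bar>u\<bar> \<le> R"
  shows "\<bar>Hf \<phi> b s t - Hf \<phi> b s u\<bar> \<le> Hf \<phi> b (Suc s) R * \<bar>t - u\<bar>"
proof -
  have "norm (Hf \<phi> b s t - Hf \<phi> b s u) \<le> Hf \<phi> b (Suc s) R * norm (t - u)"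
  proof (rule field_differentiable_bound[where S="{-R..R}"])
    show "convex {-R..R}" by simp
    show "(Hf \<phi> b s has_field_derivative Hf \<phi> b (Suc s) z) (at z within {-R..R})" for z
      by (rule has_field_derivative_at_within) (rule Hf_deriv)
    show "norm (Hf \<phi> b (Suc s) z) \<le> Hf \<phi> b (Suc s) R" if "z \<in> {-R..R}" for z
      using Hf_abs_le[of z R] that by auto
    show "t \<in> {-R..R}" "u \<in> {-R..R}" using assms by auto
  qed
  thus ?thesis by simp
qed

lemma Hf_tail: "Hf \<phi> b s x - Tf \<phi> b s n x = (\<Sum>i. hd \<phi> b s (i + Suc n) * x^(i + Suc n))"
  unfolding Hf_def Tf_def using suminf_split_initial_segment[OF summable_hd, of \<phi> b s x "Suc n"] by simp


lemma tail_term: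
  assumes mono: "mono_on {2..} \<phi>" and j: "1 \<le> j" "j < k + s" and R: "0 \<le> R" "R \<le> real j"
  shows "hd \<phi> b s k * R^k \<le> 2 / (2^k * real (Pf \<phi> j (Dseq \<phi> j)))"
proof -
  define i where "i = k + s"
  define P where "P = real (Pf \<phi> j (Dseq \<phi> j))"
  define D where "D = real (Dseq \<phi> i)"
  have P1: "P \<ge> 1" unfolding P_def using Pf_pos[OF Dseq_pos] by simp
  have i1: "real i \<ge> 1" using j unfolding i_def by simp
  have Dbig: "D \<ge> real i ^ (2*i) * 2^i * P" unfolding D_def P_def i_def
    by (rule Dseq_big[OF mono j(1)]) (use j in simp)
  have ii: "real i ^ i \<le> real i ^ (2*i)" using i1 by (intro power_increasing) auto
  have ipos: "real i ^ i > 0" using i1 by simp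
  have Dpos: "D > 0" unfolding D_def using Dseq_pos[of \<phi> i] by simp
  have Mle: "real (Mf s k) \<le> real i ^ s"
  proof -
    have "Mf s k \<le> i ^ s" unfolding i_def by (rule Mf_le)
    hence "real (Mf s k) \<le> real (i ^ s)" by (simp only: of_nat_le_iff)
    thus ?thesis by simp
  qed
  have Rk: "R ^ k \<le> real i ^ k" using R j unfolding i_def by (intro power_mono) auto
  have "hd \<phi> b s k * R^k = real (Mf s k) * real (Af b k') / D * R^k" if "k' = k + s" for k'
    using that by (simp add: hd_eq cr_def D_def i_def)
  hence "hd \<phi> b s k * R^k = real (Mf s k) * real (Af b (k+s)) / D * R^k" by simp
  also have "\<dots> \<le> real i ^ s * 2 / D * real i ^ k"
    using Mle Af_bounds[of b "k+s"] Dpos R Rk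
    by (intro mult_mono divide_right_mono) (auto intro: zero_le_power)
  also have "\<dots> = 2 * real i ^ i / D" unfolding i_def by (simp add: power_add field_simps)
  also have "\<dots> \<le> 2 * real i ^ i / (real i ^ i * 2^i * P)"
  proof (rule divide_left_mono)
    have "real i ^ i * 2^i * P \<le> real i ^ (2*i) * 2^i * P" using ii P1 by (intro mult_right_mono) auto
    thus "real i ^ i * 2 ^ i * P \<le> D" using Dbig by linarith
    show "0 \<le> 2 * real i ^ i" using ipos by simp
    show "0 < D * (real i ^ i * 2 ^ i * P)" using Dpos ipos P1 by (intro mult_pos_pos) auto
  qed
  also have "\<dots> = 2 / (2^i * P)" using ipos by (simp add: field_simps)
  also have "\<dots> \<le> 2 / (2^k * P)"
    using P1 unfolding i_def by (intro divide_left_mono mult_right_mono power_increasing) auto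
  finally show ?thesis unfolding P_def .
qed

lemma tail_bound:
  assumes mono: "mono_on {2..} \<phi>" and n: "1 \<le> n" and j: "j = n + s"
    and x: "\<bar>x\<bar> \<le> R" and R: "R \<le> real j"
  shows "\<bar>Hf \<phi> b s x - Tf \<phi> b s n x\<bar> \<le> 1 / real (Pf \<phi> j (Dseq \<phi> j))"
proof -
  define P where "P = real (Pf \<phi> j (Dseq \<phi> j))"
  have P1: "P \<ge> 1" unfolding P_def using Pf_pos[OF Dseq_pos] by simp
  have gs: "(\<lambda>i. (1/(2*P)) * (1/2)^i) sums ((1/(2*P)) * (1 / (1 - 1/2)))"
    by (intro sums_mult geometric_sums) simp
  hence gs': "(\<lambda>i. (1/(2*P)) * (1/2)^i) sums (1/P)" by simp
  have R0: "0 \<le> R" using x by linarith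
  have "\<bar>\<Sum>i. hd \<phi> b s (i + Suc n) * x^(i + Suc n)\<bar> \<le> (\<Sum>i. (1/(2*P)) * (1/2)^i)"
  proof (rule suminf_abs_bound)
    show "summable (\<lambda>i. (1/(2*P)) * (1/2)^i)" using gs by (rule sums_summable)
    fix i
    let ?k = "i + Suc n"
    have "\<bar>hd \<phi> b s ?k * x^?k\<bar> = hd \<phi> b s ?k * \<bar>x\<bar>^?k"
      using hd_pos[of \<phi> b s ?k] by (simp add: abs_mult power_abs)
    also have "\<dots> \<le> hd \<phi> b s ?k * R^?k" using x hd_pos[of \<phi> b s ?k]
      by (intro mult_left_mono power_mono) auto
    also have "\<dots> \<le> 2 / (2^?k * P)" unfolding P_def
      using n j R R0 by (intro tail_term[OF mono]) auto
    also have "\<dots> \<le> (1/(2*P)) * (1/2)^i"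
    proof -
      have "(2::real)^(i+2) \<le> 2^?k" using n by (intro power_increasing) auto
      hence "(2::real) * 2^i * 2 \<le> 2^?k" by (simp add: power_add)
      hence "2 / (2^?k * P) \<le> 2 / (2 * 2^i * 2 * P)" using P1
        by (intro divide_left_mono mult_right_mono) auto
      also have "\<dots> = (1/(2*P)) * (1/2)^i" by (simp add: field_simps power_divide)
      finally show ?thesis .
    qed
    finally show "\<bar>hd \<phi> b s ?k * x^?k\<bar> \<le> (1/(2*P)) * (1/2)^i" .
  qed
  also have "\<dots> = 1/P" using gs' by (rule sums_unique[symmetric])
  finally show ?thesis unfolding Hf_tail P_def .
qed


lemma main_bound:
  assumes mono: "mono_on {2..} \<phi>" and n: "1 \<le> n" and j: "j = n + s"
    and R: "R = \<bar>\<zeta>\<bar> + 1" "R \<le> real j" and K: "2 * Hf \<phi> b (Suc s) R \<le> 2 ^ j"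
    and q: "2 \<le> q" "real_of_int q \<le> \<phi> (real (Nf j (Dseq \<phi> j)))"
    and app: "\<bar>\<zeta> - p/q\<bar> \<le> 1 / real_of_int q ^ Suc (Nf j (Dseq \<phi> j))"
  shows "\<bar>Hf \<phi> b s \<zeta> - Tf \<phi> b s n (p/q)\<bar> \<le> 1 / (real_of_int q ^ n * real (Dseq \<phi> j)) ^ n"
proof -
  define Q where "Q = real_of_int q"
  define Dr where "Dr = real (Dseq \<phi> j)"
  define NN where "NN = Nf j (Dseq \<phi> j)"
  define x where "x = p/q"
  define Kc where "Kc = Hf \<phi> b (Suc s) R"
  define X where "X = Q ^ n * Dr"
  have Q2: "Q \<ge> 2" unfolding Q_def using q by simp
  have Dr1: "Dr \<ge> 1" unfolding Dr_def using Dseq_pos[of \<phi> j] by simp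
  have X1: "X \<ge> 1"
  proof -
    have "Q ^ n \<ge> 1" using Q2 by (intro one_le_power) auto
    hence "1 * 1 \<le> Q ^ n * Dr" using Dr1 by (intro mult_mono) auto
    thus ?thesis unfolding X_def by simp
  qed
  have Xn: "X ^ n > 0" using X1 by simp
  have Kc0: "Kc \<ge> 0" unfolding Kc_def using Hf_abs_le[of R R \<phi> b "Suc s"] R(1) by simp
  have "Q ^ Suc NN \<ge> 1" using Q2 by (intro one_le_power) auto
  hence Qpow: "1 / Q ^ Suc NN \<le> 1" by simp
  have xz: "\<bar>\<zeta> - x\<bar> \<le> 1 / Q ^ Suc NN" using app unfolding x_def Q_def NN_def by simp
  hence xR: "\<bar>x\<bar> \<le> R" using Qpow R by linarith
  have zR: "\<bar>\<zeta>\<bar> \<le> R" using R by simp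
  have lip: "\<bar>Hf \<phi> b s \<zeta> - Hf \<phi> b s x\<bar> \<le> Kc / Q ^ Suc NN"
  proof -
    have "\<bar>Hf \<phi> b s \<zeta> - Hf \<phi> b s x\<bar> \<le> Kc * \<bar>\<zeta> - x\<bar>" unfolding Kc_def by (rule Hf_lipschitz[OF zR xR])
    also have "\<dots> \<le> Kc * (1 / Q ^ Suc NN)" using xz Kc0 by (rule mult_left_mono)
    finally show ?thesis by simp
  qed
  have big: "2 * Kc * X ^ n \<le> Q ^ Suc NN"
  proof -
    have DD: "Dr ^ n \<le> Q ^ (j * Dseq \<phi> j)"
    proof -
      have "Dseq \<phi> j < 2 ^ Dseq \<phi> j" by (rule less_exp)
      hence "Dr \<le> 2 ^ Dseq \<phi> j" unfolding Dr_def
        by (metis less_imp_le of_nat_le_iff of_nat_numeral of_nat_power)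
      also have "\<dots> \<le> Q ^ Dseq \<phi> j" using Q2 by (intro power_mono) auto
      finally have "Dr \<le> Q ^ Dseq \<phi> j" .
      hence "Dr ^ n \<le> (Q ^ Dseq \<phi> j) ^ n" using Dr1 by (intro power_mono) auto
      also have "\<dots> \<le> (Q ^ Dseq \<phi> j) ^ j" using j Q2 by (intro power_increasing one_le_power) auto
      also have "\<dots> = Q ^ (j * Dseq \<phi> j)" by (simp add: power_mult[symmetric] mult.commute)
      finally show ?thesis .
    qed
    have KQ: "2 * Kc \<le> Q ^ j"
    proof -
      have "2 * Kc \<le> 2 ^ j" using K unfolding Kc_def .
      also have "\<dots> \<le> Q ^ j" using Q2 by (intro power_mono) auto
      finally show ?thesis .
    qed
    have "2 * Kc * X ^ n = Q ^ (n*n) * (2 * Kc * Dr ^ n)"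
      unfolding X_def by (simp add: power_mult_distrib power_mult[symmetric] mult_ac)
    also have "\<dots> \<le> Q ^ (n*n) * (Q ^ j * Q ^ (j * Dseq \<phi> j))"
      using KQ DD Kc0 Q2 Dr1 by (intro mult_left_mono mult_mono) auto
    also have "\<dots> = Q ^ (n*n + j + j * Dseq \<phi> j)" by (simp add: power_add)
    also have "\<dots> \<le> Q ^ Suc NN"
    proof (rule power_increasing)
      have "n * n \<le> j * j" using j by (intro mult_le_mono) auto
      thus "n * n + j + j * Dseq \<phi> j \<le> Suc NN" unfolding NN_def Nf_def by linarith
    qed (use Q2 in auto)
    finally show ?thesis .
  qed
  have part1: "Kc / Q ^ Suc NN \<le> 1 / (2 * X ^ n)"
  proof -
    have Qp: "Q ^ Suc NN > 0" using Q2 by simp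
    have "Kc * (2 * X ^ n) \<le> Q ^ Suc NN" using big by (simp add: mult_ac)
    hence "Kc \<le> Q ^ Suc NN / (2 * X ^ n)" using Xn by (simp add: le_divide_eq)
    hence "Kc / Q ^ Suc NN \<le> (Q ^ Suc NN / (2 * X ^ n)) / Q ^ Suc NN" using Qp by (intro divide_right_mono) auto
    also have "\<dots> = 1 / (2 * X ^ n)" using Qp Xn Q2 by (simp add: field_simps)
    finally show ?thesis .
  qed
  have PX: "2 * X ^ n \<le> real (Pf \<phi> j (Dseq \<phi> j))"
  proof -
    define Ph where "Ph = real (Phif \<phi> j (Dseq \<phi> j))"
    have QPh: "Q \<le> Ph"
    proof -
      have "Q \<le> \<phi> (real NN)" using q unfolding Q_def NN_def by simp
      also have "\<dots> \<le> real (nat \<lceil>\<phi> (real NN)\<rceil>)" by linarith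
      also have "\<dots> \<le> Ph" unfolding Ph_def Phif_def NN_def by simp
      finally show ?thesis .
    qed
    have "X = Q ^ n * Dr" by (simp add: X_def)
    also have "\<dots> \<le> Ph ^ j * Dr"
    proof -
      have "Q ^ n \<le> Ph ^ n" using QPh Q2 by (intro power_mono) auto
      also have "\<dots> \<le> Ph ^ j" using j QPh Q2 by (intro power_increasing) auto
      finally show ?thesis using Dr1 by (intro mult_right_mono) auto
    qed
    finally have XP: "X \<le> Ph ^ j * Dr" .
    have "X ^ n \<le> (Ph ^ j * Dr) ^ n" using XP X1 by (intro power_mono) auto
    also have "\<dots> \<le> (Ph ^ j * Dr) ^ j" using j XP X1 by (intro power_increasing) auto
    finally have "2 * X ^ n \<le> 2 * (Ph ^ j * Dr) ^ j" by simp
    also have "\<dots> = real (Pf \<phi> j (Dseq \<phi> j))" unfolding Pf_def Ph_def Dr_def by simp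
    finally show ?thesis .
  qed
  have tail: "\<bar>Hf \<phi> b s x - Tf \<phi> b s n x\<bar> \<le> 1 / (2 * X ^ n)"
  proof -
    have "\<bar>Hf \<phi> b s x - Tf \<phi> b s n x\<bar> \<le> 1 / real (Pf \<phi> j (Dseq \<phi> j))"
      by (rule tail_bound[OF mono n j xR R(2)])
    also have "\<dots> \<le> 1 / (2 * X ^ n)" using PX Xn by (intro divide_left_mono) auto
    finally show ?thesis .
  qed
  have "\<bar>Hf \<phi> b s \<zeta> - Tf \<phi> b s n x\<bar> \<le> \<bar>Hf \<phi> b s \<zeta> - Hf \<phi> b s x\<bar> + \<bar>Hf \<phi> b s x - Tf \<phi> b s n x\<bar>"
    by linarith
  also have "\<dots> \<le> 1 / (2 * X ^ n) + 1 / (2 * X ^ n)" using lip part1 tail by linarith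
  also have "\<dots> = 1 / X ^ n" by simp
  finally show ?thesis unfolding x_def X_def Q_def Dr_def .
qed


definition ecoef :: "(real \<Rightarrow> real) \<Rightarrow> (nat \<Rightarrow> bool) \<Rightarrow> nat \<Rightarrow> nat \<Rightarrow> nat \<Rightarrow> int" where
  "ecoef \<phi> b s n k = int (Mf s k * Af b (k+s) * (Dseq \<phi> (n+s) div Dseq \<phi> (k+s)))"
definition Zf :: "(real \<Rightarrow> real) \<Rightarrow> (nat \<Rightarrow> bool) \<Rightarrow> nat \<Rightarrow> nat \<Rightarrow> int \<Rightarrow> int \<Rightarrow> int" where
  "Zf \<phi> b s n p q = (\<Sum>k<Suc n. ecoef \<phi> b s n k * p^k * q^(n-k))"

lemma T_int:
  assumes "q \<noteq> 0"
  shows "Tf \<phi> b s n (p/q) * (real_of_int q ^ n * real (Dseq \<phi> (n+s))) = of_int (Zf \<phi> b s n p q)"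
proof -
  have "Tf \<phi> b s n (p/q) * (real_of_int q ^ n * real (Dseq \<phi> (n+s)))
      = (\<Sum>k<Suc n. hd \<phi> b s k * (p/q)^k * (real_of_int q ^ n * real (Dseq \<phi> (n+s))))"
    unfolding Tf_def by (rule sum_distrib_right)
  also have "\<dots> = (\<Sum>k<Suc n. of_int (ecoef \<phi> b s n k * p^k * q^(n-k)))"
  proof (rule sum.cong[OF refl])
    fix k assume "k \<in> {..<Suc n}"
    hence kn: "k \<le> n" by simp
    have dv: "Dseq \<phi> (k+s) dvd Dseq \<phi> (n+s)" using kn by (intro Dseq_dvd) simp
    have Dk: "real (Dseq \<phi> (k+s)) > 0" using Dseq_pos[of \<phi> "k+s"] by simp
    have qn: "real_of_int q ^ n = real_of_int q ^ k * real_of_int q ^ (n-k)"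
      using kn by (simp add: power_add[symmetric])
    have qk: "real_of_int q ^ k \<noteq> 0" using assms by simp
    have "hd \<phi> b s k * (p/q)^k * (real_of_int q ^ n * real (Dseq \<phi> (n+s)))
       = real (Mf s k) * real (Af b (k+s)) / real (Dseq \<phi> (k+s)) * (real_of_int p ^ k / real_of_int q ^ k)
         * (real_of_int q ^ k * real_of_int q ^ (n-k) * real (Dseq \<phi> (n+s)))"
      by (simp add: hd_eq cr_def qn power_divide)
    also have "\<dots> = real (Mf s k) * real (Af b (k+s)) * (real (Dseq \<phi> (n+s)) / real (Dseq \<phi> (k+s)))
         * real_of_int p ^ k * real_of_int q ^ (n-k)"
      using qk Dk assms by (simp add: field_simps)
    also have "\<dots> = of_int (ecoef \<phi> b s n k * p^k * q^(n-k))"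
      unfolding ecoef_def using real_of_nat_div[OF dv] by simp
    finally show "hd \<phi> b s k * (p/q)^k * (real_of_int q ^ n * real (Dseq \<phi> (n+s)))
        = of_int (ecoef \<phi> b s n k * p^k * q^(n-k))" .
  qed
  also have "\<dots> = of_int (Zf \<phi> b s n p q)" unfolding Zf_def by simp
  finally show ?thesis .
qed

lemma ecoef_n: "ecoef \<phi> b s n n = int (Mf s n * Af b (n+s))"
  using Dseq_pos[of \<phi> "n+s"] by (simp add: ecoef_def)

lemma rat_root:
  fixes u v a0 b0 :: int
  assumes b0: "b0 > 0" and v: "v > 0" and cop: "coprime u v" and n: "n \<ge> 1"
    and T: "Tf \<phi> b s n (u/v) = a0/b0"
  shows "v dvd b0 * ecoef \<phi> b s n n"
proof -
  have "of_int (Zf \<phi> b s n u v) = a0/b0 * (real_of_int v ^ n * real (Dseq \<phi> (n+s)))"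
    using T_int[of v \<phi> b s n u] v T by simp
  hence "real_of_int (b0 * Zf \<phi> b s n u v) = real_of_int (a0 * v ^ n * int (Dseq \<phi> (n+s)))"
    using b0 by (simp add: field_simps)
  hence eq: "b0 * Zf \<phi> b s n u v = a0 * v ^ n * int (Dseq \<phi> (n+s))" by (simp only: of_int_eq_iff)
  have split: "Zf \<phi> b s n u v = (\<Sum>k<n. ecoef \<phi> b s n k * u^k * v^(n-k)) + ecoef \<phi> b s n n * u^n"
    unfolding Zf_def by simp
  have d1: "v dvd (\<Sum>k<n. ecoef \<phi> b s n k * u^k * v^(n-k))"
  proof (rule dvd_sum)
    fix k assume "k \<in> {..<n}"
    hence "n - k = Suc (n - k - 1)" by simp
    hence "v dvd v^(n-k)" by (metis dvd_power zero_less_Suc)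
    thus "v dvd ecoef \<phi> b s n k * u^k * v^(n-k)" by simp
  qed
  have d2: "v dvd a0 * v ^ n * int (Dseq \<phi> (n+s))"
  proof -
    have "n = Suc (n-1)" using n by simp
    hence "v dvd v^n" by (metis dvd_power zero_less_Suc)
    thus ?thesis by simp
  qed
  have "b0 * ecoef \<phi> b s n n * u^n = a0 * v ^ n * int (Dseq \<phi> (n+s)) - b0 * (\<Sum>k<n. ecoef \<phi> b s n k * u^k * v^(n-k))"
    using eq split by (simp add: algebra_simps)
  hence "v dvd (b0 * ecoef \<phi> b s n n) * u^n" using d1 d2 by (simp add: dvd_diff)
  moreover have "coprime v (u^n)" using cop by (simp add: coprime_commute)
  ultimately show ?thesis using coprime_dvd_mult_left_iff by blast
qed

lemma frac_close_eq:
  fixes u v u2 v2 :: int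
  assumes "0 < v" "v \<le> V" "0 < v2" "v2 \<le> V2"
    and "\<bar>u/v - u2/v2\<bar> < 1 / (real_of_int V * real_of_int V2)"
  shows "real_of_int u / v = u2/v2"
proof (rule ccontr)
  assume ne: "real_of_int u / v \<noteq> u2/v2"
  have e: "real_of_int u / v - u2/v2 = of_int (u * v2 - u2 * v) / of_int (v * v2)"
    using assms by (simp add: field_simps)
  have "u * v2 - u2 * v \<noteq> 0"
  proof
    assume "u * v2 - u2 * v = 0"
    hence "real_of_int (u * v2 - u2 * v) = 0" by simp
    hence "real_of_int u / v - u2/v2 = 0" using e by simp
    thus False using ne by simp
  qed
  hence ge1: "\<bar>real_of_int (u * v2 - u2 * v)\<bar> \<ge> 1" by linarith
  have pos: "real_of_int (v * v2) > 0" using assms by simp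
  have "real_of_int (v * v2) \<le> real_of_int V * real_of_int V2"
    using assms by (simp add: mult_mono)
  hence "1 / (real_of_int V * real_of_int V2) \<le> 1 / real_of_int (v * v2)" using pos
    by (intro divide_left_mono) auto
  also have "\<dots> \<le> \<bar>real_of_int (u * v2 - u2 * v)\<bar> / real_of_int (v * v2)" using ge1 pos
    by (intro divide_right_mono) auto
  also have "\<dots> = \<bar>real_of_int u / v - u2/v2\<bar>" unfolding e using pos by simp
  finally show False using assms(5) by linarith
qed


lemma nat_bound:
  fixes B j s :: nat
  assumes "8 * B^2 \<le> j" "2 * s+1 \<le> j"
  shows "2 * (2 * B * j^s) * (2 * B * (Suc j)^s) < 2^(j * j)"
proof -
  have jlt: "j < 2^j" by (rule less_exp)
  have a: "2 * (2 * B * j^s) * (2 * B * (Suc j)^s) \<le> 8 * B^2 * ((Suc j)^s * (Suc j)^s)"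
  proof -
    have "j^s \<le> (Suc j)^s" by (rule power_mono) auto
    hence "2 * (2 * B * j^s) * (2 * B * (Suc j)^s) \<le> 2 * (2 * B * (Suc j)^s) * (2 * B * (Suc j)^s)" by simp
    also have "\<dots> = 8 * B^2 * ((Suc j)^s * (Suc j)^s)" by (simp add: power2_eq_square)
    finally show ?thesis .
  qed
  have b: "(Suc j)^s * (Suc j)^s \<le> 2^(2 * j * s)"
  proof -
    have h: "Suc j \<le> 2^j" using jlt by (simp only: Suc_le_eq)
    have h2: "(Suc j)^s \<le> (2^j)^s" by (rule power_mono[OF h]) (rule zero_le)
    have "(Suc j)^s * (Suc j)^s \<le> (2^j)^s * (2^j)^s" by (rule mult_le_mono[OF h2 h2])
    also have "\<dots> = 2^(2 * j * s)" by (simp add: power_mult[symmetric] power_add[symmetric] mult_2 add_mult_distrib)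
    finally show ?thesis .
  qed
  have c: "8 * B^2 < 2^j" using assms(1) jlt by linarith
  have "2 * (2 * B * j^s) * (2 * B * (Suc j)^s) \<le> 8 * B^2 * 2^(2 * j * s)"
    using a b by (meson mult_le_mono2 order_trans)
  also have "\<dots> < 2^j * 2^(2 * j * s)" using c by simp
  also have "\<dots> = 2^(j * (2 * s+1))" by (simp add: power_add[symmetric] algebra_simps)
  also have "\<dots> \<le> 2^(j * j)"
  proof (rule power_increasing)
    show "j * (2 * s + 1) \<le> j * j" using assms(2) by (rule mult_le_mono2)
  qed simp
  finally show ?thesis .
qed

lemma approx_pow2:
  fixes p q :: int and \<zeta> :: real
  assumes "2 \<le> q" "\<bar>\<zeta> - p/q\<bar> \<le> 1 / real_of_int q ^ Suc N" "m \<le> Suc N"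
  shows "\<bar>\<zeta> - p/q\<bar> \<le> 1 / 2^m"
proof -
  have "(2::real)^m \<le> 2^Suc N" using assms(3) by (intro power_increasing) auto
  also have "\<dots> \<le> real_of_int q ^ Suc N" using assms(1) by (intro power_mono) auto
  finally have h: "(2::real)^m \<le> real_of_int q ^ Suc N" .
  have "1 / real_of_int q ^ Suc N \<le> 1 / 2^m"
    by (rule divide_left_mono[OF h]) (use assms(1) in auto)
  thus ?thesis using assms(2) by linarith
qed

lemma Tf_Suc: "Tf \<phi> b s (Suc n) t = Tf \<phi> b s n t + hd \<phi> b s (Suc n) * t^(Suc n)"
  unfolding Tf_def by simp


lemma H_Liouville:
  assumes phi: "\<phi> \<in> Phi_class" and good: "Good \<phi> \<zeta>"
  shows "Hf \<phi> b s \<zeta> \<in> Liouville_set"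
proof -
  have mono: "mono_on {2..} \<phi>" using phi by (simp add: Phi_class_def)
  from good have nz: "\<zeta> \<noteq> 0" unfolding Good_def by blast
  from good obtain N0 where hN0: "\<And>N. N \<ge> N0 \<Longrightarrow> \<exists>q p::int. 2 \<le> q \<and> real_of_int q \<le> \<phi> (real N) \<and>
      \<bar>\<zeta> - p/q\<bar> \<le> 1 / real_of_int q ^ Suc N" unfolding Good_def by blast
  define QP where "QP N = (SOME qp :: int \<times> int. 2 \<le> fst qp \<and> real_of_int (fst qp) \<le> \<phi> (real N) \<and>
      \<bar>\<zeta> - snd qp / fst qp\<bar> \<le> 1 / real_of_int (fst qp) ^ Suc N)" for N
  have QPp: "2 \<le> fst (QP N) \<and> real_of_int (fst (QP N)) \<le> \<phi> (real N) \<and>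
      \<bar>\<zeta> - snd (QP N) / fst (QP N)\<bar> \<le> 1 / real_of_int (fst (QP N)) ^ Suc N" if N0le: "N \<ge> N0" for N
  proof -
    obtain q p :: int where "2 \<le> q \<and> real_of_int q \<le> \<phi> (real N) \<and> \<bar>\<zeta> - p/q\<bar> \<le> 1 / real_of_int q ^ Suc N"
      using hN0[OF N0le] by blast
    hence "\<exists>qp :: int \<times> int. 2 \<le> fst qp \<and> real_of_int (fst qp) \<le> \<phi> (real N) \<and>
      \<bar>\<zeta> - snd qp / fst qp\<bar> \<le> 1 / real_of_int (fst qp) ^ Suc N" by (intro exI[of _ "(q,p)"]) simp
    thus ?thesis unfolding QP_def by (rule someI_ex)
  qed
  define R where "R = \<bar>\<zeta>\<bar> + 1"
  define K where "K = Hf \<phi> b (Suc s) R"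
  define n0 where "n0 = N0 + nat \<lceil>R\<rceil> + nat \<lceil>2 * K\<rceil> + 1"
  define NN where "NN n = Nf (n + s) (Dseq \<phi> (n + s))" for n
  define q where "q n = fst (QP (NN n))" for n
  define p where "p n = snd (QP (NN n))" for n
  define X where "X n = q n ^ n * int (Dseq \<phi> (n + s))" for n
  define Y where "Y n = Zf \<phi> b s n (p n) (q n)" for n
  have NNge: "NN n \<ge> (n + s) * (n + s) \<and> NN n \<ge> n" for n unfolding NN_def Nf_def
    by (metis le_add1 add.commute le_add2 order_trans mult_le_mono Nat.le_add1)
  have qp: "2 \<le> q n \<and> real_of_int (q n) \<le> \<phi> (real (NN n)) \<and>
      \<bar>\<zeta> - p n / q n\<bar> \<le> 1 / real_of_int (q n) ^ Suc (NN n)" if "n \<ge> n0" for n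
  proof -
    have "NN n \<ge> N0" using NNge[of n] that unfolding n0_def by linarith
    thus ?thesis unfolding q_def p_def by (rule QPp)
  qed
  have XD: "X n \<ge> int (Dseq \<phi> (n + s))" if "n \<ge> n0" for n
  proof -
    have "q n ^ n \<ge> 1" using qp[OF that] by (intro one_le_power) auto
    hence "1 * int (Dseq \<phi> (n + s)) \<le> q n ^ n * int (Dseq \<phi> (n + s))" by (intro mult_right_mono) auto
    thus ?thesis unfolding X_def by simp
  qed
  have Xge: "X n \<ge> int n" "X n \<ge> 1" if "n \<ge> n0" for n
  proof -
    have "int n \<le> int (n + s)" by simp
    also have "\<dots> \<le> int (Dseq \<phi> (n + s))" using Dseq_ge_self[of "n + s" \<phi>] by simp
    also have "\<dots> \<le> X n" by (rule XD[OF that])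
    finally show "X n \<ge> int n" .
    have "n \<ge> 1" using that unfolding n0_def by simp
    thus "X n \<ge> 1" using \<open>X n \<ge> int n\<close> by linarith
  qed
  have TY: "Tf \<phi> b s n (p n / q n) = Y n / X n" if "n \<ge> n0" for n
  proof -
    have q0: "q n \<noteq> 0" using qp[OF that] by auto
    have "Tf \<phi> b s n (p n / q n) * (real_of_int (q n) ^ n * real (Dseq \<phi> (n + s))) = of_int (Y n)"
      unfolding Y_def by (rule T_int[OF q0])
    moreover have "real_of_int (X n) = real_of_int (q n) ^ n * real (Dseq \<phi> (n + s))" unfolding X_def by simp
    moreover have "real_of_int (X n) \<noteq> 0" using Xge(2)[OF that] by simp
    ultimately show ?thesis by (simp add: field_simps)
  qed
  have U: "\<bar>Hf \<phi> b s \<zeta> - Y n / X n\<bar> \<le> 1 / real_of_int (X n) ^ n" if "n \<ge> n0" for n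
  proof -
    have n1: "1 \<le> n" using that unfolding n0_def by simp
    have Rj: "R \<le> real (n + s)" using that unfolding n0_def by linarith
    have "2 * K \<le> real n" using that unfolding n0_def by linarith
    also have "\<dots> \<le> real (n + s)" by simp
    also have "\<dots> \<le> 2 ^ (n + s)"
    proof -
      have "n + s < 2 ^ (n + s)" by (rule less_exp)
      hence "real (n + s) < real (2 ^ (n + s))" by (simp only: of_nat_less_iff)
      thus ?thesis by simp
    qed
    finally have K2: "2 * Hf \<phi> b (Suc s) R \<le> 2 ^ (n + s)" unfolding K_def .
    have "\<bar>Hf \<phi> b s \<zeta> - Tf \<phi> b s n (p n / q n)\<bar> \<le> 1 / (real_of_int (q n) ^ n * real (Dseq \<phi> (n + s))) ^ n"
      using qp[OF that] unfolding NN_def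
      by (intro main_bound[OF mono n1 refl R_def Rj K2]) auto
    thus ?thesis using TY[OF that] unfolding X_def by simp
  qed
  show ?thesis
  proof (rule liou_crit)
    show "\<exists>x y::int. 1 \<le> x \<and> int k \<le> x \<and> \<bar>Hf \<phi> b s \<zeta> - y/x\<bar> \<le> 1 / real_of_int x ^ k" for k
    proof -
      define n where "n = max k n0"
      have nn0: "n \<ge> n0" unfolding n_def by simp
      have kn: "k \<le> n" unfolding n_def by simp
      have X1: "real_of_int (X n) \<ge> 1" using Xge(2)[OF nn0] by simp
      have "1 / real_of_int (X n) ^ n \<le> 1 / real_of_int (X n) ^ k"
        using X1 kn by (intro divide_left_mono power_increasing) auto
      hence "\<bar>Hf \<phi> b s \<zeta> - Y n / X n\<bar> \<le> 1 / real_of_int (X n) ^ k" using U[OF nn0] by linarith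
      moreover have "int k \<le> X n" using Xge(1)[OF nn0] kn by linarith
      ultimately show ?thesis using Xge(2)[OF nn0] by blast
    qed
  next
    show "Hf \<phi> b s \<zeta> \<notin> \<rat>"
    proof
      assume "Hf \<phi> b s \<zeta> \<in> \<rat>"
      then obtain a0 b0 :: int where ab: "b0 > 0" "Hf \<phi> b s \<zeta> = a0 / b0"
        using Rats_cases' by metis
      define n1 where "n1 = n0 + nat b0 + 2"
      have step1: "Tf \<phi> b s n (p n / q n) = a0 / b0" if "n \<ge> n1" for n
      proof -
        have nn0: "n \<ge> n0" using that unfolding n1_def by simp
        have Xb: "X n > b0" using Xge(1)[OF nn0] that unfolding n1_def by linarith
        have X1: "X n \<ge> 1" by (rule Xge(2)[OF nn0])
        have Xr: "real_of_int (X n) > 0" using X1 by simp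
        have br: "real_of_int b0 > 0" using ab by simp
        have "real_of_int (X n) ^ 2 \<le> real_of_int (X n) ^ n"
          using X1 that unfolding n1_def by (intro power_increasing) auto
        moreover have "real_of_int b0 * real_of_int (X n) < real_of_int (X n) ^ 2"
          using Xb Xr by (simp add: power2_eq_square)
        ultimately have bX: "real_of_int b0 * real_of_int (X n) < real_of_int (X n) ^ n" by linarith
        have "\<bar>real_of_int (a0 * X n - b0 * Y n)\<bar> = real_of_int b0 * real_of_int (X n) * \<bar>a0 / b0 - Y n / X n\<bar>"
        proof -
          have "real_of_int (a0 * X n - b0 * Y n) = real_of_int b0 * real_of_int (X n) * (a0 / b0 - Y n / X n)"
            using Xr br by (simp add: field_simps)
          thus ?thesis using Xr br by (simp add: abs_mult)
        qed
        also have "\<dots> \<le> real_of_int b0 * real_of_int (X n) * (1 / real_of_int (X n) ^ n)"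
          using U[OF nn0] ab(2) Xr br by (intro mult_left_mono) auto
        also have "\<dots> < 1" using bX Xr by (simp add: field_simps)
        finally have "a0 * X n - b0 * Y n = 0" by linarith
        hence "a0 * X n = b0 * Y n" by simp
        hence "real_of_int (a0 * X n) = real_of_int (b0 * Y n)" by (simp only: of_int_eq_iff)
        hence e: "real_of_int a0 * real_of_int (X n) = real_of_int b0 * real_of_int (Y n)" by simp
        have "real_of_int (Y n) / real_of_int (X n) = a0 / b0"
          using Xr br e by (simp add: field_simps)
        thus ?thesis using TY[OF nn0] by simp
      qed
      have step2: "\<exists>(u::int) (v::int). 0 < v \<and> v \<le> 2 * b0 * int ((n + s) ^ s) \<and> real_of_int (p n) / q n = real_of_int u / real_of_int v"
        if "n \<ge> n1" for n
      proof -
        have "real_of_int (p n) / q n \<in> \<rat>" by simp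
        then obtain u v :: int where uv: "v > 0" "coprime u v" "real_of_int (p n) / q n = u / v"
          using Rats_cases' by metis
        have n1': "n \<ge> 1" using that unfolding n1_def n0_def by simp
        have "Tf \<phi> b s n (u / v) = a0 / b0" using step1[OF that] uv(3) by simp
        hence dv: "v dvd b0 * ecoef \<phi> b s n n" by (intro rat_root[OF ab(1) uv(1) uv(2) n1'])
        have epos: "ecoef \<phi> b s n n > 0" unfolding ecoef_n using Mf_pos[of s n] Af_bounds[of b "n+s"]
          by (simp add: ge1_mult)
        have ele: "ecoef \<phi> b s n n \<le> 2 * int ((n + s) ^ s)"
        proof -
          have "Mf s n * Af b (n+s) \<le> (n + s) ^ s * 2" using Mf_le[of s n] Af_bounds(2)[of b "n+s"]
            by (rule mult_le_mono)
          hence "int (Mf s n * Af b (n+s)) \<le> int ((n + s) ^ s * 2)" by (simp only: of_nat_le_iff)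
          thus ?thesis unfolding ecoef_n by simp
        qed
        have "v \<le> b0 * ecoef \<phi> b s n n" using dv ab(1) epos by (intro zdvd_imp_le) auto
        also have "\<dots> \<le> b0 * (2 * int ((n + s) ^ s))" using ele ab(1) by (intro mult_left_mono) auto
        finally show ?thesis using uv by (intro exI[of _ u] exI[of _ v]) (simp add: mult_ac)
      qed
      define n2 where "n2 = n1 + 8 * nat b0 ^ 2 + 2 * s + 1"
      have close: "\<bar>\<zeta> - p n / q n\<bar> \<le> 1 / 2 ^ m" if "n \<ge> n0" "m \<le> Suc (NN n)" for n m
        using qp[OF that(1)] that(2) by (intro approx_pow2) auto
      have step3: "real_of_int (p (Suc n)) / q (Suc n) = p n / q n" if "n \<ge> n2" for n
      proof -
        define j where "j = n + s"
        have nn1: "n \<ge> n1" "Suc n \<ge> n1" using that unfolding n2_def by auto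
        have nn0: "n \<ge> n0" "Suc n \<ge> n0" using nn1 unfolding n1_def by auto
        obtain u v where uv: "0 < v" "v \<le> 2 * b0 * int (j ^ s)" "real_of_int (p n) / q n = real_of_int u / real_of_int v"
          using step2[OF nn1(1)] unfolding j_def by blast
        obtain u2 v2 where uv2: "0 < v2" "v2 \<le> 2 * b0 * int ((Suc j) ^ s)"
            "real_of_int (p (Suc n)) / q (Suc n) = real_of_int u2 / real_of_int v2"
          using step2[OF nn1(2)] unfolding j_def by auto
        have c1: "\<bar>\<zeta> - p n / q n\<bar> \<le> 1 / 2 ^ (j * j)"
          using NNge[of n] unfolding j_def by (intro close[OF nn0(1)]) auto
        have c2: "\<bar>\<zeta> - p (Suc n) / q (Suc n)\<bar> \<le> 1 / 2 ^ (j * j)"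
        proof -
          have "j * j \<le> (Suc n + s) * (Suc n + s)" unfolding j_def by (intro mult_le_mono) auto
          hence "j * j \<le> Suc (NN (Suc n))" using NNge[of "Suc n"] by linarith
          thus ?thesis by (intro close[OF nn0(2)])
        qed
        define B where "B = nat b0"
        have Bb: "int B = b0" unfolding B_def using ab(1) by simp
        have jb: "8 * B ^ 2 \<le> j" "2 * s + 1 \<le> j" using that unfolding j_def n2_def B_def by auto
        have nb: "2 * (2 * B * j ^ s) * (2 * B * (Suc j) ^ s) < 2 ^ (j * j)" by (rule nat_bound[OF jb])
        hence nbr: "real (2 * (2 * B * j ^ s) * (2 * B * (Suc j) ^ s)) < real (2 ^ (j * j))"
          by (simp only: of_nat_less_iff)
        define V where "V = 2 * b0 * int (j ^ s)"
        define V2 where "V2 = 2 * b0 * int ((Suc j) ^ s)"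
        have VV: "real_of_int V * real_of_int V2 = real (2 * B * j ^ s) * real (2 * B * (Suc j) ^ s)"
          unfolding V_def V2_def Bb[symmetric] by simp
        have j0: "j > 0" using jb by simp
        have "V > 0" unfolding V_def using ab(1) j0 by (simp add: zero_less_mult_iff)
        moreover have "V2 > 0" unfolding V2_def using ab(1) by (simp add: zero_less_mult_iff)
        ultimately have Vpos: "real_of_int V * real_of_int V2 > 0" by simp
        have "\<bar>real_of_int u / real_of_int v - real_of_int u2 / real_of_int v2\<bar> \<le> 2 / 2 ^ (j * j)" using c1 c2 uv(3) uv2(3) by linarith
        also have "\<dots> < 1 / (real_of_int V * real_of_int V2)"
        proof -
          have "2 * (real_of_int V * real_of_int V2) < 2 ^ (j * j)" using nbr unfolding VV by simp
          thus ?thesis using Vpos by (simp add: field_simps)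
        qed
        finally have "real_of_int u / real_of_int v = real_of_int u2 / real_of_int v2"
          using uv(1,2) uv2(1,2) unfolding V_def[symmetric] V2_def[symmetric]
          by (intro frac_close_eq) auto
        thus ?thesis using uv(3) uv2(3) by simp
      qed
      define xs where "xs = real_of_int (p n2) / q n2"
      have step4: "real_of_int (p n) / q n = xs" if "n \<ge> n2" for n
        using that
      proof (induction n rule: dec_induct)
        case base then show ?case by (simp add: xs_def)
      next
        case (step m) then show ?case using step3[of m] by simp
      qed
      have step5: "\<zeta> = xs"
      proof (rule ccontr)
        assume "\<zeta> \<noteq> xs"
        hence d: "\<bar>\<zeta> - xs\<bar> > 0" by simp
        obtain m where m: "(1/2::real) ^ m < \<bar>\<zeta> - xs\<bar>" using real_arch_pow_inv[OF d, of "1/2"] by auto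
        define n where "n = max m n2"
        have nn2: "n \<ge> n2" unfolding n_def by simp
        have nn0: "n \<ge> n0" using nn2 unfolding n2_def n1_def by simp
        have "\<bar>\<zeta> - xs\<bar> \<le> 1 / 2 ^ m"
        proof -
          have "m \<le> Suc (NN n)" using NNge[of n] unfolding n_def by linarith
          hence "\<bar>\<zeta> - p n / q n\<bar> \<le> 1 / 2 ^ m" by (rule close[OF nn0])
          thus ?thesis using step4[OF nn2] by simp
        qed
        thus False using m by (simp add: power_divide)
      qed
      have "Tf \<phi> b s n2 \<zeta> = a0 / b0" using step1[of n2] step4[of n2] step5 unfolding n2_def by simp
      moreover have "Tf \<phi> b s (Suc n2) \<zeta> = a0 / b0" using step1[of "Suc n2"] step4[of "Suc n2"] step5 unfolding n2_def by simp
      ultimately have "hd \<phi> b s (Suc n2) * \<zeta> ^ Suc n2 = 0" unfolding Tf_Suc by simp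
      thus False using hd_pos[of \<phi> b s "Suc n2"] nz by simp
    qed
  qed
qed


definition cq :: "(real \<Rightarrow> real) \<Rightarrow> (nat \<Rightarrow> bool) \<Rightarrow> nat \<Rightarrow> rat" where
  "cq \<phi> b k = of_nat (Af b k) / of_nat (Dseq \<phi> k)"
definition Fb :: "(real \<Rightarrow> real) \<Rightarrow> (nat \<Rightarrow> bool) \<Rightarrow> complex \<Rightarrow> complex" where
  "Fb \<phi> b z = (\<Sum>k. of_rat (cq \<phi> b k) * z^k)"

lemma cq_cr: "(of_rat (cq \<phi> b k) :: complex) = of_real (cr \<phi> b k)"
  by (simp add: cq_def cr_def of_rat_divide)

lemma cq_nz: "cq \<phi> b k \<noteq> 0"
  using Af_bounds[of b k] Dseq_pos[of \<phi> k] by (simp add: cq_def)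

lemma Fb_eq: "Fb \<phi> b = (\<lambda>z. \<Sum>k. of_real (cr \<phi> b k) * z^k)"
  unfolding Fb_def cq_cr by simp

lemma summable_Fb: "summable (\<lambda>k. of_rat (cq \<phi> b k) * (z::complex)^k)"
  unfolding cq_cr by (rule summable_cr)

lemma deriv_Fb: "(deriv ^^ s) (Fb \<phi> b) = (\<lambda>z. \<Sum>n. (diffs ^^ s) (\<lambda>k. of_real (cr \<phi> b k)) n * z^n)"
  unfolding Fb_eq by (rule deriv_iter) (rule summable_cr)

lemma diffs_cc: "(diffs ^^ s) (\<lambda>k. of_real (cr \<phi> b k) :: complex) n = of_real (hd \<phi> b s n)"
  by (simp add: diffs_iter hd_eq)

lemma deriv_Fb_real: "(deriv ^^ s) (Fb \<phi> b) (of_real t) = of_real (Hf \<phi> b s t)"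
proof -
  have "(deriv ^^ s) (Fb \<phi> b) (of_real t) = (\<Sum>n. of_real (hd \<phi> b s n * t^n) :: complex)"
    unfolding deriv_Fb diffs_cc by simp
  also have "\<dots> = of_real (\<Sum>n. hd \<phi> b s n * t^n)"
    by (rule suminf_of_real[symmetric]) (rule summable_hd)
  finally show ?thesis unfolding Hf_def .
qed

lemma deriv_Fb_0: "(deriv ^^ s) (Fb \<phi> b) 0 = of_nat (Mf s 0) * of_rat (cq \<phi> b s)"
proof -
  have "(deriv ^^ s) (Fb \<phi> b) 0 = (diffs ^^ s) (\<lambda>k. of_real (cr \<phi> b k) :: complex) 0"
    unfolding deriv_Fb by (rule powser_zero)
  also have "\<dots> = of_nat (Mf s 0) * of_rat (cq \<phi> b s)" by (simp add: diffs_iter cq_cr)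
  finally show ?thesis .
qed

lemma deriv_poly_iter: "(deriv ^^ k) (poly p) = poly ((pderiv ^^ k) p)"
proof (induction k)
  case 0 then show ?case by simp
next
  case (Suc k)
  have "(deriv ^^ Suc k) (poly p) = deriv (poly ((pderiv ^^ k) p))" using Suc by simp
  also have "\<dots> = poly (pderiv ((pderiv ^^ k) p))"
    by (rule ext, rule DERIV_imp_deriv) (rule poly_DERIV)
  finally show ?case by simp
qed

lemma degree_pderiv_iter:
  fixes p :: "complex poly"
  shows "degree ((pderiv ^^ k) p) = degree p - k"
  by (induction k) (simp_all add: degree_pderiv)

lemma pderiv_iter_zero:
  fixes p :: "complex poly"
  shows "(pderiv ^^ Suc (degree p)) p = 0"
proof -
  have "degree ((pderiv ^^ degree p) p) = 0" by (simp add: degree_pderiv_iter)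
  hence "pderiv ((pderiv ^^ degree p) p) = 0" by (simp add: pderiv_eq_0_iff)
  thus ?thesis by simp
qed

lemma Fb_transcendental: "entire_transcendental (Fb \<phi> b)"
  unfolding entire_transcendental_def
proof
  show "Fb \<phi> b holomorphic_on UNIV"
    unfolding holomorphic_on_def field_differentiable_def
  proof
    fix x :: complex
    have "(Fb \<phi> b has_field_derivative (\<Sum>n. diffs (\<lambda>k. of_real (cr \<phi> b k)) n * x^n)) (at x)"
      unfolding Fb_eq by (rule termdiffs_strong_converges_everywhere) (rule summable_cr)
    thus "\<exists>f'. (Fb \<phi> b has_field_derivative f') (at x within UNIV)" by blast
  qed
  show "\<not> (\<exists>p :: complex poly. \<forall>z. Fb \<phi> b z = poly p z)"
  proof
    assume "\<exists>p :: complex poly. \<forall>z. Fb \<phi> b z = poly p z"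
    then obtain p :: "complex poly" where "\<forall>z. Fb \<phi> b z = poly p z" by blast
    hence e: "Fb \<phi> b = poly p" by auto
    define k where "k = Suc (degree p)"
    have "(deriv ^^ k) (Fb \<phi> b) 0 = 0" unfolding e deriv_poly_iter k_def pderiv_iter_zero by simp
    moreover have "(deriv ^^ k) (Fb \<phi> b) 0 \<noteq> 0" unfolding deriv_Fb_0
      using Mf_pos[of k 0] cq_nz[of \<phi> b k] by simp
    ultimately show False by simp
  qed
qed

lemma Fb_inj: "inj (Fb \<phi>)"
proof (rule injI)
  fix b b' assume e: "Fb \<phi> b = Fb \<phi> b'"
  show "b = b'"
  proof
    fix k
    have "(deriv ^^ k) (Fb \<phi> b) 0 = (deriv ^^ k) (Fb \<phi> b') 0" using e by simp
    hence "(of_nat (Mf k 0) :: complex) * of_rat (cq \<phi> b k) = of_nat (Mf k 0) * of_rat (cq \<phi> b' k)"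
      unfolding deriv_Fb_0 .
    hence "cq \<phi> b k = cq \<phi> b' k" using Mf_pos[of k 0] by simp
    hence "Af b k = Af b' k" using Dseq_pos[of \<phi> k] by (simp add: cq_def)
    thus "b k = b' k" by (auto simp: Af_def split: if_splits)
  qed
qed

lemma uncountable_bool_seq: "uncountable (UNIV :: (nat \<Rightarrow> bool) set)"
  unfolding uncountable_def
proof (intro conjI notI)
  show False if "UNIV = ({} :: (nat \<Rightarrow> bool) set)" using that by simp
  assume "\<exists>f :: nat \<Rightarrow> nat \<Rightarrow> bool. range f = UNIV"
  then obtain f :: "nat \<Rightarrow> nat \<Rightarrow> bool" where f: "range f = UNIV" by blast
  have "(\<lambda>n. \<not> f n n) \<in> range f" using f by simp
  then obtain m where "(\<lambda>n. \<not> f n n) = f m" by auto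
  hence "(\<not> f m m) = f m m" by (metis)
  thus False by simp
qed


theorem theorem4p3:
  fixes \<phi> :: "real \<Rightarrow> real"
  assumes "\<phi> \<in> Phi_class"
  shows "uncountable {f :: complex \<Rightarrow> complex.
     entire_transcendental f \<and>
     (\<exists>c :: nat \<Rightarrow> rat. (\<forall>j. c j \<noteq> 0) \<and>
        (\<forall>z. (\<lambda>j. of_rat (c j) * z ^ j) sums f z)) \<and>
     (\<forall>s::nat.
        (deriv ^^ s) f 0 \<in> \<rat> \<and>
        (\<forall>r::real. r \<in> \<rat> \<and> r \<noteq> 0 \<longrightarrow>
            (\<exists>l \<in> Liouville_set. (deriv ^^ s) f (of_real r) = of_real l)) \<and>
        (\<forall>\<zeta> \<in> Liouville_phi_star \<phi>.
            (\<exists>l \<in> Liouville_set. (deriv ^^ s) f (of_real \<zeta>) = of_real l)))}"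
  (is "uncountable ?S")
proof -
  have sub: "range (Fb \<phi>) \<subseteq> ?S"
  proof
    fix f assume "f \<in> range (Fb \<phi>)"
    then obtain b where fb: "f = Fb \<phi> b" by blast
    have c: "\<exists>c :: nat \<Rightarrow> rat. (\<forall>j. c j \<noteq> 0) \<and> (\<forall>z. (\<lambda>j. of_rat (c j) * z ^ j) sums f z)"
    proof (intro exI[of _ "cq \<phi> b"] conjI allI)
      show "cq \<phi> b j \<noteq> 0" for j by (rule cq_nz)
      show "(\<lambda>j. of_rat (cq \<phi> b j) * z ^ j) sums f z" for z
        unfolding fb Fb_def by (rule summable_sums) (rule summable_Fb)
    qed
    have d: "(deriv ^^ s) f 0 \<in> \<rat> \<and>
        (\<forall>r::real. r \<in> \<rat> \<and> r \<noteq> 0 \<longrightarrow>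
            (\<exists>l \<in> Liouville_set. (deriv ^^ s) f (of_real r) = of_real l)) \<and>
        (\<forall>\<zeta> \<in> Liouville_phi_star \<phi>.
            (\<exists>l \<in> Liouville_set. (deriv ^^ s) f (of_real \<zeta>) = of_real l))" for s
    proof (intro conjI allI impI ballI)
      show "(deriv ^^ s) f 0 \<in> \<rat>" unfolding fb deriv_Fb_0
        by (intro Rats_mult Rats_of_nat Rats_of_rat)
      fix r :: real assume "r \<in> \<rat> \<and> r \<noteq> 0"
      hence "Good \<phi> r" using rat_Good[OF assms] by blast
      hence "Hf \<phi> b s r \<in> Liouville_set" by (rule H_Liouville[OF assms])
      thus "\<exists>l \<in> Liouville_set. (deriv ^^ s) f (of_real r) = of_real l"
        unfolding fb deriv_Fb_real by blast
    next
      fix \<zeta> assume "\<zeta> \<in> Liouville_phi_star \<phi>"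
      hence "Good \<phi> \<zeta>" by (rule Lstar_Good)
      hence "Hf \<phi> b s \<zeta> \<in> Liouville_set" by (rule H_Liouville[OF assms])
      thus "\<exists>l \<in> Liouville_set. (deriv ^^ s) f (of_real \<zeta>) = of_real l"
        unfolding fb deriv_Fb_real by blast
    qed
    have T: "entire_transcendental f" unfolding fb by (rule Fb_transcendental)
    show "f \<in> ?S" unfolding mem_Collect_eq by (rule conjI[OF T conjI[OF c allI[OF d]]])
  qed
  show ?thesis
  proof
    assume "countable ?S"
    hence "countable (range (Fb \<phi>))" using sub by (rule countable_subset[rotated])
    hence "countable (UNIV :: (nat \<Rightarrow> bool) set)"
      by (rule countable_image_inj_on[OF _ Fb_inj])
    thus False using uncountable_bool_seq by simp
  qed
qed


end
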